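(* For every $n\ge1$, the bijection $B_0$ from signed forests of rooted trees on $\{1,\dots,n\}$ to $C(n+1)$ is compatible with the actions of $\mathfrak{S}_{n+1}$: for every $\sigma\in\mathfrak{S}_{n+1}$ and every signed forest $\varepsilon F$, $B_0(\sigma\cdot(\varepsilon F))=\sigma\cdot B_0(\varepsilon F)$.
   Context: A shrub $P$ on a finite set $I$ is a set $E$ of edges with a height function $h_P:I\to\mathbb{N}$ satisfying: edges join vertices whose heights differ by $1$; every vertex of positive height covers some vertex ($j$ covers $i$ if $\{i,j\}\in E$ and $h(j)=h(i)+1$); no four distinct $a,b,c,d$ with $a$ covering $b,c$, $c$ covering $d$, $\{b,d\}\notin E$; no five distinct $a,b,c,d,e$ with $a$ covering $c,d$, $b$ covering $d,e$, $\{a,e\},\{b,c\}\notin E$. Forests of rooted trees are the shrubs (height = distance to root) in which no vertex covers two distinct vertices. Each shrub $P$ on $\{1,\dots,n\}$ has a fraction $f_P\in\mathbb{Q}(u_1,\dots,u_n)$, its image under the operad morphism $\operatorname{Arb}\to\operatorname{Mould}$ determined by $[2\triangleleft1]\mapsto1/(u_1(u_1+u_2))$, $[1][2]\mapsto1/(u_1u_2)$ (for a forest, $f_F=\prod_j 1/\sum_{k\in F_j}u_k$ where $F_j$ is the subtree rooted at $j$). $\mathfrak{S}_{n+1}$ (permutations of $\{0,\dots,n\}$) acts on $\mathbb{Q}(u_1,\dots,u_n)$ by setting $u_0=-(u_1+\dots+u_n)$ and permuting $u_0,\dots,u_n$. On signed shrubs $\varepsilon P$ ($\varepsilon=\pm1$)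 the anticyclic action is $\sigma\cdot(\varepsilon P)=\varepsilon'P'$ where $\varepsilon'f_{P'}=\sigma\cdot(\varepsilon f_P)$ (well defined since $\varepsilon P\mapsto\varepsilon f_P$ is injective with $\mathfrak{S}_{n+1}$-stable image); it maps signed forests to signed forests. $C(n+1)$ is the set of signed rooted trees $\varepsilon(T,r)$ on $\{0,1,\dots,n\}$ modulo the relation $(T,r)=-(T,r')$ whenever $r'$ is adjacent to $r$ in $T$; $\mathfrak{S}_{n+1}$ acts on it by relabelling vertices. $B_0(\varepsilon F)=\varepsilon B_+(0,F)$, where $B_+(0,F)$ is the tree rooted at a new vertex $0$ obtained by joining $0$ to the roots of the trees of $F$. *)

theory Defs
  imports Complex_Main "HOL-Combinatorics.Permutations"
begin

(* A forest of rooted trees on {1..n}, given by its parent function: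
   p i = Some j means that j is the parent of i; roots have p i = None. *)
definition par_rel :: "(nat \<Rightarrow> nat option) \<Rightarrow> (nat \<times> nat) set" where
  "par_rel p = {(i, j). p i = Some j}"

definition is_forest :: "nat \<Rightarrow> (nat \<Rightarrow> nat option) \<Rightarrow> bool" where
  "is_forest n p \<longleftrightarrow>
     (\<forall>i. i \<notin> {1..n} \<longrightarrow> p i = None) \<and>
     (\<forall>i j. p i = Some j \<longrightarrow> j \<in> {1..n}) \<and>
     (\<forall>i. (i, i) \<notin> (par_rel p)\<^sup>+)"

definition subtree :: "(nat \<Rightarrow> nat option) \<Rightarrow> nat \<Rightarrow> nat set" where
  "subtree p j = {k. (k, j) \<in> (par_rel p)\<^sup>*}"

definition fF :: "nat \<Rightarrow> (nat \<Rightarrow> nat option) \<Rightarrow> (nat \<Rightarrow> real) \<Rightarrow> real" where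
  "fF n p u = (\<Prod>j\<in>{1..n}. 1 / (\<Sum>k\<in>subtree p j. u k))"

definition ext0 :: "nat \<Rightarrow> (nat \<Rightarrow> real) \<Rightarrow> nat \<Rightarrow> real" where
  "ext0 n u i = (if i = 0 then - (\<Sum>k\<in>{1..n}. u k) else u i)"

(* (sigma . g)(u_1,...,u_n) = g(u_{sigma 1},...,u_{sigma n}) *)
definition perm_pt :: "nat \<Rightarrow> (nat \<Rightarrow> nat) \<Rightarrow> (nat \<Rightarrow> real) \<Rightarrow> nat \<Rightarrow> real" where
  "perm_pt n \<sigma> u = (\<lambda>i. ext0 n u (\<sigma> i))"

(* generic points: no partial sum sum_{i in A} u_i (A nonempty proper subset of {0..n}) vanishes;
   all denominators involved are nonzero there, and this set is Zariski dense *)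
definition generic :: "nat \<Rightarrow> (nat \<Rightarrow> real) \<Rightarrow> bool" where
  "generic n u \<longleftrightarrow> (\<forall>A. A \<subseteq> {0..n} \<longrightarrow> A \<noteq> {} \<longrightarrow> A \<noteq> {0..n} \<longrightarrow> (\<Sum>i\<in>A. ext0 n u i) \<noteq> 0)"

(* signed forests: (eps, p) with eps in {1,-1}.
   anticyc_rel n sigma (eps,p) (eps',p')  <->  eps' f_{F'} = sigma . (eps f_F)
   (equality in Q(u_1..u_n), tested on the dense set of generic points) *)
definition anticyc_rel :: "nat \<Rightarrow> (nat \<Rightarrow> nat) \<Rightarrow> int \<times> (nat \<Rightarrow> nat option)
     \<Rightarrow> int \<times> (nat \<Rightarrow> nat option) \<Rightarrow> bool" where
  "anticyc_rel n \<sigma> x y \<longleftrightarrow>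
     (\<forall>u. generic n u \<longrightarrow>
        of_int (fst y) * fF n (snd y) u = of_int (fst x) * fF n (snd x) (perm_pt n \<sigma> u))"

(* signed rooted trees on {0..n}: (eps, edge set of 2-element sets, root) *)
type_synonym srtree = "int \<times> nat set set \<times> nat"

(* B_0(eps F) = eps B_+(0,F) *)
definition B0 :: "nat \<Rightarrow> int \<times> (nat \<Rightarrow> nat option) \<Rightarrow> srtree" where
  "B0 n x = (fst x,
     {{i, j} | i j. snd x i = Some j} \<union> {{0, j} | j. j \<in> {1..n} \<and> snd x j = None},
     0)"

definition relabel :: "(nat \<Rightarrow> nat) \<Rightarrow> srtree \<Rightarrow> srtree" where
  "relabel \<sigma> t = (case t of (e, E, r) \<Rightarrow> (e, (\<lambda>ed. \<sigma> ` ed) ` E, \<sigma> r))"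

(* generating relation of C(n+1): eps (T,r) = -eps (T,r') for r' adjacent to r *)
definition c_step :: "srtree \<Rightarrow> srtree \<Rightarrow> bool" where
  "c_step t t' = (case t of (e, E, r) \<Rightarrow> case t' of (e', E', r') \<Rightarrow>
      E' = E \<and> e' = - e \<and> r \<noteq> r' \<and> {r, r'} \<in> E)"

(* equality in C(n+1): the equivalence relation generated by c_step *)
definition C_eq :: "srtree \<Rightarrow> srtree \<Rightarrow> bool" where
  "C_eq = (sup c_step (c_step\<inverse>\<inverse>))\<^sup>*\<^sup>*"

end

theory Submission
  imports Defs "HOL-Computational_Algebra.Polynomial"
begin

lemma rtrancl_avoid:
  assumes "(a,b) \<in> S\<^sup>*" "b \<noteq> z" "\<And>x y. (x,y) \<in> S \<Longrightarrow> y \<noteq> z \<Longrightarrow> (x,y) \<in> R"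
    "\<And>y. (z,y) \<notin> S"
  shows "(a,b) \<in> R\<^sup>*"
  using assms(1,2)
proof (induction rule: converse_rtrancl_induct)
  case base then show ?case by simp
next
  case (step x y)
  have "y \<noteq> z" using step assms(4) by (metis converse_rtranclE)
  then show ?case using step assms(3) by (meson converse_rtrancl_into_rtrancl)
qed

lemma trancl_avoid:
  assumes "(a,b) \<in> S\<^sup>+" "b \<noteq> z" "\<And>x y. (x,y) \<in> S \<Longrightarrow> y \<noteq> z \<Longrightarrow> (x,y) \<in> R"
    "\<And>y. (z,y) \<notin> S"
  shows "(a,b) \<in> R\<^sup>+"
proof -
  obtain y where "(a,y) \<in> S" "(y,b) \<in> S\<^sup>*" using assms(1) by (meson tranclD)
  have "(y,b) \<in> R\<^sup>*" using rtrancl_avoid[OF \<open>(y,b) \<in> S\<^sup>*\<close> assms(2-4)] by blast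
  moreover have "y \<noteq> z" using \<open>(y,b) \<in> S\<^sup>*\<close> assms(2,4) by (metis converse_rtranclE)
  hence "(a,y) \<in> R" using assms(3) \<open>(a,y) \<in> S\<close> by blast
  ultimately show ?thesis by (meson rtrancl_into_trancl2)
qed

lemma acyclic_avoid:
  assumes "acyclic R" "\<And>x y. (x,y) \<in> S \<Longrightarrow> y \<noteq> z \<Longrightarrow> (x,y) \<in> R"
    "\<And>y. (z,y) \<notin> S"
  shows "acyclic S"
  unfolding acyclic_def
proof
  fix x show "(x,x) \<notin> S\<^sup>+"
  proof
    assume h: "(x,x) \<in> S\<^sup>+"
    show False
    proof (cases "x = z")
      case True then show ?thesis using h assms(3) by (meson tranclD)
    next
      case False then show ?thesis using trancl_avoid[OF h False assms(2,3)] assms(1)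
        unfolding acyclic_def by blast
    qed
  qed
qed


lemma par_rel_iff[simp]: "(x,y) \<in> par_rel q \<longleftrightarrow> q x = Some y"
  by (simp add: par_rel_def)

definition rtree :: "nat set \<Rightarrow> nat \<Rightarrow> (nat \<Rightarrow> nat option) \<Rightarrow> bool" where
  "rtree V r q \<longleftrightarrow> finite V \<and> r \<in> V \<and> q r = None \<and> (\<forall>x. x \<notin> V \<longrightarrow> q x = None)
     \<and> (\<forall>x\<in>V. x \<noteq> r \<longrightarrow> q x \<noteq> None) \<and> (\<forall>x y. q x = Some y \<longrightarrow> y \<in> V) \<and> acyclic (par_rel q)"

definition Ed :: "(nat \<Rightarrow> nat option) \<Rightarrow> nat set set" where
  "Ed q = {{j, m} | j m. q j = Some m}"

definition G :: "nat set \<Rightarrow> (nat \<Rightarrow> nat option) \<Rightarrow> (nat \<Rightarrow> real) \<Rightarrow> real" where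
  "G V q e = (\<Prod>j\<in>{j\<in>V. q j \<noteq> None}. 1 / (\<Sum>k\<in>subtree q j. e k))"

lemma subtree_sub:
  assumes "rtree V r q" "j \<in> V" shows "subtree q j \<subseteq> V"
proof
  fix k assume "k \<in> subtree q j"
  hence "(k,j) \<in> (par_rel q)\<^sup>*" by (simp add: subtree_def)
  then show "k \<in> V"
  proof (cases rule: converse_rtranclE)
    case base then show ?thesis using assms by simp
  next
    case (step y) then show ?thesis using assms unfolding rtree_def by auto
  qed
qed

lemma self_in_subtree: "j \<in> subtree q j" by (simp add: subtree_def)

lemma finite_par_rel:
  assumes "rtree V r q" shows "finite (par_rel q)"
proof -
  have "par_rel q \<subseteq> V \<times> V" using assms unfolding rtree_def by auto
  then show ?thesis using assms finite_subset unfolding rtree_def by blast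
qed

lemma reach_root:
  assumes "rtree V r q" "k \<in> V" shows "(k,r) \<in> (par_rel q)\<^sup>*"
proof -
  have wf: "wf ((par_rel q)\<inverse>)"
    using finite_acyclic_wf_converse[OF finite_par_rel[OF assms(1)]] assms(1)
    unfolding rtree_def by blast
  have "k \<in> V \<longrightarrow> (k,r) \<in> (par_rel q)\<^sup>*"
  proof (induction k rule: wf_induct[OF wf])
    case (1 k)
    show ?case
    proof
      assume kV: "k \<in> V"
      show "(k,r) \<in> (par_rel q)\<^sup>*"
      proof (cases "q k")
        case None then have "k = r" using kV assms(1) unfolding rtree_def by auto
        then show ?thesis by simp
      next
        case (Some y)
        then have "y \<in> V" using assms(1) unfolding rtree_def by auto
        moreover have "(y,k) \<in> (par_rel q)\<inverse>" using Some by simp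
        ultimately have "(y,r) \<in> (par_rel q)\<^sup>*" using 1 by blast
        then show ?thesis using Some by (meson converse_rtrancl_into_rtrancl par_rel_iff)
      qed
    qed
  qed
  then show ?thesis using assms by blast
qed

lemma root_in_chain:
  assumes "q r = None" "(r,j) \<in> (par_rel q)\<^sup>*" shows "j = r"
  using assms(2) by (cases rule: converse_rtranclE) (use assms(1) in auto)

lemma reroot_step:
  assumes T: "rtree V r q" and c: "q c = Some r"
  defines "q' \<equiv> q(c := None, r := Some c)"
  shows "rtree V c q'" "Ed q' = Ed q"
    "\<And>j. j \<noteq> r \<Longrightarrow> j \<noteq> c \<Longrightarrow> subtree q' j = subtree q j"
    "subtree q' r = V - subtree q c"
    "\<And>e. (\<Sum>k\<in>V. e k) = 0 \<Longrightarrow> G V q' e = - G V q e"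
proof -
  let ?R = "par_rel q" and ?R' = "par_rel q'"
  have rc: "r \<noteq> c" using c T unfolding rtree_def by auto
  have cV: "c \<in> V" using c T unfolding rtree_def by (metis option.distinct(1))
  have rV: "r \<in> V" using T unfolding rtree_def by auto
  have qr: "q r = None" using T unfolding rtree_def by auto
  have acyc: "acyclic ?R" using T unfolding rtree_def by auto
  have A1: "\<And>x y. (x,y) \<in> ?R' \<Longrightarrow> y \<noteq> c \<Longrightarrow> (x,y) \<in> ?R"
    using qr by (auto simp: q'_def split: if_splits)
  have A2: "\<And>y. (c,y) \<notin> ?R'" by (simp add: q'_def rc[symmetric])
  have B1: "\<And>x y. (x,y) \<in> ?R \<Longrightarrow> y \<noteq> r \<Longrightarrow> (x,y) \<in> ?R'"
    using c qr by (auto simp: q'_def)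
  have B2: "\<And>y. (r,y) \<notin> ?R" using qr by simp
  show "rtree V c q'"
    unfolding rtree_def
  proof (intro conjI)
    show "acyclic ?R'" using acyclic_avoid[OF acyc A1 A2] .
  qed (use T cV rc c in \<open>auto simp: q'_def rtree_def\<close>)
  show "Ed q' = Ed q"
  proof (intro set_eqI iffI)
    fix x assume "x \<in> Ed q'"
    then obtain j m where x: "x = {j,m}" "q' j = Some m" unfolding Ed_def by auto
    show "x \<in> Ed q"
    proof (cases "j = r")
      case True then have "m = c" using x by (simp add: q'_def)
      then show ?thesis using x True c unfolding Ed_def by (auto simp: insert_commute)
    next
      case False then show ?thesis using x by (auto simp: q'_def Ed_def split: if_splits)
    qed
  next
    fix x assume "x \<in> Ed q"
    then obtain j m where x: "x = {j,m}" "q j = Some m" unfolding Ed_def by auto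
    show "x \<in> Ed q'"
    proof (cases "j = c")
      case True then have "m = r" using x c by simp
      then have "q' r = Some j" using True by (simp add: q'_def)
      then show ?thesis using x \<open>m = r\<close> unfolding Ed_def by (auto simp: insert_commute)
    next
      case False then have "j \<noteq> r" using x qr by auto
      then show ?thesis using x False by (auto simp: q'_def Ed_def)
    qed
  qed
  show S1: "\<And>j. j \<noteq> r \<Longrightarrow> j \<noteq> c \<Longrightarrow> subtree q' j = subtree q j"
    unfolding subtree_def using rtrancl_avoid[OF _ _ A1 A2] rtrancl_avoid[OF _ _ B1 B2] by blast
  show S2: "subtree q' r = V - subtree q c"
  proof (intro set_eqI iffI)
    fix k assume "k \<in> subtree q' r"
    hence h: "(k,r) \<in> ?R'\<^sup>*" by (simp add: subtree_def)
    have "k \<notin> subtree q c" using h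
    proof (induction rule: converse_rtrancl_induct)
      case base then show ?case using root_in_chain[of q r, OF qr] rc by (auto simp: subtree_def)
    next
      case (step k y)
      show ?case
      proof
        assume kin: "k \<in> subtree q c"
        show False
        proof (cases "k = r")
          case True then show False using kin root_in_chain[of q r, OF qr] rc by (auto simp: subtree_def)
        next
          case False
          then have "q k = Some y" "k \<noteq> c" using step(1) by (auto simp: q'_def split: if_splits)
          moreover have "(k,c) \<in> ?R\<^sup>*" using kin by (simp add: subtree_def)
          ultimately have "(y,c) \<in> ?R\<^sup>*" by (metis converse_rtranclE option.inject par_rel_iff)
          then show False using step(3) by (simp add: subtree_def)
        qed
      qed
    qed
    moreover have "k \<in> V"
      using subtree_sub[OF \<open>rtree V c q'\<close> rV] \<open>k \<in> subtree q' r\<close> by blast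
    ultimately show "k \<in> V - subtree q c" by blast
  next
    fix k assume "k \<in> V - subtree q c"
    hence kV: "k \<in> V" and kn: "k \<notin> subtree q c" by auto
    have "(k,r) \<in> ?R\<^sup>*" using reach_root[OF T kV] .
    then have "k \<notin> subtree q c \<longrightarrow> (k,r) \<in> ?R'\<^sup>*"
    proof (induction rule: converse_rtrancl_induct)
      case base then show ?case by simp
    next
      case (step k y)
      show ?case
      proof
        assume k: "k \<notin> subtree q c"
        have "y \<notin> subtree q c" using k step(1)
          by (auto simp: subtree_def intro: converse_rtrancl_into_rtrancl)
        hence "(y,r) \<in> ?R'\<^sup>*" using step by blast
        moreover have "k \<noteq> c" using k self_in_subtree by metis
        hence "(k,y) \<in> ?R'" using step(1) qr by (auto simp: q'_def)
        ultimately show "(k,r) \<in> ?R'\<^sup>*" by (meson converse_rtrancl_into_rtrancl)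
      qed
    qed
    then show "k \<in> subtree q' r" using kn by (simp add: subtree_def)
  qed
  show "\<And>e. (\<Sum>k\<in>V. e k) = 0 \<Longrightarrow> G V q' e = - G V q e"
  proof -
    fix e :: "nat \<Rightarrow> real" assume e0: "(\<Sum>k\<in>V. e k) = 0"
    have fV: "finite V" using T unfolding rtree_def by auto
    have I: "{j\<in>V. q j \<noteq> None} = insert c (V - {r,c})"
      using T cV rc unfolding rtree_def by auto
    have I': "{j\<in>V. q' j \<noteq> None} = insert r (V - {r,c})"
      using T rV rc unfolding rtree_def q'_def by auto
    let ?f = "\<lambda>q j. 1 / (\<Sum>k\<in>subtree q j. e k)"
    have eqp: "(\<Prod>j\<in>V-{r,c}. ?f q' j) = (\<Prod>j\<in>V-{r,c}. ?f q j)"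
      by (rule prod.cong) (use S1 in auto)
    have "(\<Sum>k\<in>subtree q' r. e k) = - (\<Sum>k\<in>subtree q c. e k)"
      using S2 sum_diff[OF fV subtree_sub[OF T cV], of e] e0 by simp
    hence fr: "?f q' r = - ?f q c" by simp
    have "G V q' e = ?f q' r * (\<Prod>j\<in>V-{r,c}. ?f q' j)"
      unfolding G_def I' using fV by (subst prod.insert) auto
    also have "\<dots> = - (?f q c * (\<Prod>j\<in>V-{r,c}. ?f q j))" using fr eqp by simp
    also have "?f q c * (\<Prod>j\<in>V-{r,c}. ?f q j) = G V q e"
      unfolding G_def I using fV by (subst prod.insert) auto
    finally show "G V q' e = - G V q e" .
  qed
qed


lemma C_eq_refl: "C_eq x x" by (simp add: C_eq_def)
lemma C_eq_trans: "C_eq x y \<Longrightarrow> C_eq y z \<Longrightarrow> C_eq x z"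
  unfolding C_eq_def by (rule rtranclp_trans)
lemma C_eq_step: "c_step x y \<Longrightarrow> C_eq x y"
  unfolding C_eq_def by (rule r_into_rtranclp) simp
lemma C_eq_sym: "C_eq x y \<Longrightarrow> C_eq y x"
  unfolding C_eq_def
proof (induction rule: rtranclp_induct)
  case base then show ?case by simp
next
  case (step y z)
  have "(sup c_step c_step\<inverse>\<inverse>) z y" using step(2) by auto
  then show ?case using step(3) by (meson converse_rtranclp_into_rtranclp)
qed

lemma reroot:
  assumes "rtree V r q" "z \<in> V"
  shows "\<exists>q0 (s::int). rtree V z q0 \<and> Ed q0 = Ed q \<and> (s = 1 \<or> s = -1) \<and>
     (\<forall>e. (\<Sum>k\<in>V. e k) = 0 \<longrightarrow> G V q0 e = of_int s * G V q e) \<and>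
     (\<forall>\<epsilon>. C_eq (\<epsilon>, Ed q, r) (s*\<epsilon>, Ed q, z))"
  using assms
proof (induction "card {j\<in>V. q j \<noteq> None \<and> z \<in> subtree q j}" arbitrary: q r rule: less_induct)
  case less
  note T = less.prems(1)
  have fV: "finite V" using T unfolding rtree_def by auto
  show ?case
  proof (cases "z = r")
    case True
    then show ?thesis using T by (intro exI[of _ q] exI[of _ 1]) (auto simp: C_eq_refl)
  next
    case False
    have "(z,r) \<in> (par_rel q)\<^sup>*" using reach_root[OF T less.prems(2)] .
    then obtain c where zc: "(z,c) \<in> (par_rel q)\<^sup>*" and cr: "(c,r) \<in> par_rel q"
      using False by (meson rtranclE)
    hence c: "q c = Some r" by simp
    define q' where "q' = q(c := None, r := Some c)"
    note RS = reroot_step[OF T c, folded q'_def]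
    have rc: "r \<noteq> c" using c T unfolding rtree_def by auto
    have cV: "c \<in> V" using c T unfolding rtree_def by (metis option.distinct(1))
    let ?S = "{j\<in>V. q j \<noteq> None \<and> z \<in> subtree q j}"
    let ?S' = "{j\<in>V. q' j \<noteq> None \<and> z \<in> subtree q' j}"
    have zin: "z \<in> subtree q c" using zc by (simp add: subtree_def)
    have sub: "?S' \<subseteq> ?S - {c}"
    proof
      fix j assume j: "j \<in> ?S'"
      have "j \<noteq> c" using j rc by (auto simp: q'_def split: if_splits)
      moreover have "j \<noteq> r" using j RS(4) zin by auto
      ultimately show "j \<in> ?S - {c}" using j RS(3) by (auto simp: q'_def)
    qed
    have "c \<in> ?S" using cV c zin by simp
    hence "?S' \<subset> ?S" using sub by blast
    moreover have "finite ?S" by (rule finite_subset[OF _ fV]) blast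
    ultimately have "card ?S' < card ?S" by (rule psubset_card_mono[rotated])
    from less.hyps[OF this RS(1) less.prems(2)]
    obtain q0 and s :: int where IH: "rtree V z q0" "Ed q0 = Ed q'" "s = 1 \<or> s = -1"
      "\<forall>e. (\<Sum>k\<in>V. e k) = 0 \<longrightarrow> G V q0 e = of_int s * G V q' e"
      "\<forall>\<epsilon>. C_eq (\<epsilon>, Ed q', c) (s*\<epsilon>, Ed q', z)" by blast
    show ?thesis
    proof (intro exI[of _ q0] exI[of _ "-s"] conjI allI impI)
      show "rtree V z q0" "Ed q0 = Ed q" using IH RS by auto
      show "- s = 1 \<or> - s = -1" using IH by auto
    next
      fix e :: "nat \<Rightarrow> real" assume "(\<Sum>k\<in>V. e k) = 0"
      then have "G V q0 e = of_int s * G V q' e" "G V q' e = - G V q e" using IH(4) RS(5) by auto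
      then show "G V q0 e = of_int (-s) * G V q e" by simp
    next
      fix \<epsilon> :: int
      have "{c,r} \<in> Ed q" unfolding Ed_def using c by blast
      hence "{r,c} \<in> Ed q" by (simp add: insert_commute)
      hence st: "c_step (\<epsilon>, Ed q, r) (-\<epsilon>, Ed q, c)"
        unfolding c_step_def using rc by simp
      have ih: "C_eq (-\<epsilon>, Ed q, c) (s*(-\<epsilon>), Ed q, z)" using IH(5)[rule_format, of "-\<epsilon>"] RS(2) by simp
      have "C_eq (\<epsilon>, Ed q, r) (s*(-\<epsilon>), Ed q, z)" by (rule C_eq_trans[OF C_eq_step[OF st] ih])
      then show "C_eq (\<epsilon>, Ed q, r) (-s*\<epsilon>, Ed q, z)" by simp
    qed
  qed
qed


definition qp :: "nat \<Rightarrow> (nat \<Rightarrow> nat option) \<Rightarrow> nat \<Rightarrow> nat option" where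
  "qp n p j = (if j \<in> {1..n} then Some (case p j of None \<Rightarrow> 0 | Some m \<Rightarrow> m) else None)"

lemma forest_dom: "is_forest n p \<Longrightarrow> p i = Some j \<Longrightarrow> i \<in> {1..n} \<and> j \<in> {1..n}"
  unfolding is_forest_def by (metis option.distinct(1))

lemma forest_subtree_sub:
  assumes "is_forest n p" "j \<in> {1..n}" shows "subtree p j \<subseteq> {1..n}"
proof
  fix k assume "k \<in> subtree p j"
  hence "(k,j) \<in> (par_rel p)\<^sup>*" by (simp add: subtree_def)
  then show "k \<in> {1..n}"
    by (cases rule: converse_rtranclE) (use assms forest_dom in auto)
qed

lemma qp_facts:
  assumes F: "is_forest n p"
  shows "rtree {0..n} 0 (qp n p)"
    "Ed (qp n p) = {{i, j} | i j. p i = Some j} \<union> {{0, j} | j. j \<in> {1..n} \<and> p j = None}"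
    "\<And>j. j \<in> {1..n} \<Longrightarrow> subtree (qp n p) j = subtree p j"
    "G {0..n} (qp n p) (ext0 n u) = fF n p u"
proof -
  have A1: "\<And>x y. (x,y) \<in> par_rel (qp n p) \<Longrightarrow> y \<noteq> 0 \<Longrightarrow> (x,y) \<in> par_rel p"
    by (auto simp: qp_def split: if_splits option.splits)
  have A2: "\<And>y. (0,y) \<notin> par_rel (qp n p)" by (simp add: qp_def)
  have ac: "acyclic (par_rel p)" using F unfolding is_forest_def acyclic_def by blast
  show T: "rtree {0..n} 0 (qp n p)"
    unfolding rtree_def
  proof (intro conjI)
    show "acyclic (par_rel (qp n p))" by (rule acyclic_avoid[OF ac A1 A2])
  qed (use F forest_dom in \<open>auto simp: qp_def split: option.splits\<close>)
  show "Ed (qp n p) = {{i, j} | i j. p i = Some j} \<union> {{0, j} | j. j \<in> {1..n} \<and> p j = None}"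
  proof (intro set_eqI iffI)
    fix x assume "x \<in> Ed (qp n p)"
    then obtain j m where x: "x = {j,m}" "qp n p j = Some m" unfolding Ed_def by auto
    then show "x \<in> {{i, j} | i j. p i = Some j} \<union> {{0, j} | j. j \<in> {1..n} \<and> p j = None}"
      by (cases "p j") (auto simp: qp_def insert_commute split: if_splits)
  next
    fix x assume "x \<in> {{i, j} | i j. p i = Some j} \<union> {{0, j} | j. j \<in> {1..n} \<and> p j = None}"
    then show "x \<in> Ed (qp n p)"
    proof
      assume "x \<in> {{i, j} | i j. p i = Some j}"
      then obtain i j where "x = {i,j}" "p i = Some j" by auto
      moreover then have "qp n p i = Some j" using forest_dom[OF F] by (auto simp: qp_def)
      ultimately show ?thesis unfolding Ed_def by blast
    next
      assume "x \<in> {{0, j} | j. j \<in> {1..n} \<and> p j = None}"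
      then obtain j where "x = {j,0}" "j \<in> {1..n}" "p j = None" by (auto simp: insert_commute)
      moreover then have "qp n p j = Some 0" by (auto simp: qp_def)
      ultimately show ?thesis unfolding Ed_def by blast
    qed
  qed
  have sub: "par_rel p \<subseteq> par_rel (qp n p)"
    using forest_dom[OF F] by (auto simp: qp_def)
  show ST: "\<And>j. j \<in> {1..n} \<Longrightarrow> subtree (qp n p) j = subtree p j"
  proof -
    fix j :: nat assume j: "j \<in> {1..n}"
    then have "j \<noteq> 0" by auto
    then show "subtree (qp n p) j = subtree p j"
      unfolding subtree_def using rtrancl_avoid[OF _ _ A1 A2] rtrancl_mono[OF sub] by blast
  qed
  have I: "{j\<in>{0..n}. qp n p j \<noteq> None} = {1..n}" by (auto simp: qp_def)
  show "G {0..n} (qp n p) (ext0 n u) = fF n p u"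
    unfolding G_def fF_def I
  proof (rule prod.cong[OF refl])
    fix j :: nat assume j: "j \<in> {1..n}"
    have "(\<Sum>k\<in>subtree p j. ext0 n u k) = (\<Sum>k\<in>subtree p j. u k)"
      by (rule sum.cong[OF refl]) (use forest_subtree_sub[OF F j] in \<open>auto simp: ext0_def\<close>)
    then show "1 / (\<Sum>k\<in>subtree (qp n p) j. ext0 n u k) = 1 / (\<Sum>k\<in>subtree p j. u k)"
      using ST[OF j] by simp
  qed
qed


lemma q_to_forest:
  assumes T: "rtree {0..n} 0 q0"
  defines "p0 \<equiv> (\<lambda>j. if q0 j = Some 0 then None else q0 j)"
  shows "is_forest n p0" "qp n p0 = q0"
proof -
  have sub: "par_rel p0 \<subseteq> par_rel q0" by (auto simp: p0_def split: if_splits)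
  show "is_forest n p0"
    unfolding is_forest_def
  proof (intro conjI allI impI)
    show "\<And>i. (i,i) \<notin> (par_rel p0)\<^sup>+"
      using T trancl_mono[OF _ sub] unfolding rtree_def acyclic_def by blast
    fix i assume "i \<notin> {1..n}"
    then have "i = 0 \<or> i \<notin> {0..n}" by auto
    then show "p0 i = None" using T unfolding rtree_def p0_def by auto
  next
    fix i j assume "p0 i = Some j"
    then have "q0 i = Some j" "j \<noteq> 0" by (auto simp: p0_def split: if_splits)
    then show "j \<in> {1..n}" using T unfolding rtree_def by auto
  qed
  show "qp n p0 = q0"
  proof
    fix j show "qp n p0 j = q0 j"
    proof (cases "j \<in> {1..n}")
      case True
      then obtain m where "q0 j = Some m" using T unfolding rtree_def by fastforce
      then show ?thesis using True by (auto simp: qp_def p0_def)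
    next
      case False
      then have "j = 0 \<or> j \<notin> {0..n}" by auto
      then show ?thesis using False T unfolding rtree_def qp_def by auto
    qed
  qed
qed

definition tq :: "(nat \<Rightarrow> nat) \<Rightarrow> (nat \<Rightarrow> nat option) \<Rightarrow> nat \<Rightarrow> nat option" where
  "tq \<sigma> q = (\<lambda>x. map_option \<sigma> (q (inv \<sigma> x)))"

lemma rtrancl_fmap:
  assumes "(a,b) \<in> R\<^sup>*" "\<And>x y. (x,y) \<in> R \<Longrightarrow> (f x, f y) \<in> S"
  shows "(f a, f b) \<in> S\<^sup>*"
  using assms(1) by (induction rule: rtrancl_induct) (auto intro: rtrancl_into_rtrancl assms(2))

lemma trancl_fmap:
  assumes "(a,b) \<in> R\<^sup>+" "\<And>x y. (x,y) \<in> R \<Longrightarrow> (f x, f y) \<in> S"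
  shows "(f a, f b) \<in> S\<^sup>+"
  using assms(1) by (induction rule: trancl_induct) (auto intro: trancl_into_trancl assms(2))

lemma tq_facts:
  assumes T: "rtree V r q" and b: "bij \<sigma>" and SV: "\<sigma> ` V = V"
  shows "\<And>x y. (x,y) \<in> par_rel (tq \<sigma> q) \<longleftrightarrow> (inv \<sigma> x, inv \<sigma> y) \<in> par_rel q"
    "\<And>j. subtree (tq \<sigma> q) (\<sigma> j) = \<sigma> ` subtree q j"
    "rtree V (\<sigma> r) (tq \<sigma> q)"
    "Ed (tq \<sigma> q) = (\<lambda>ed. \<sigma> ` ed) ` Ed q"
    "G V (tq \<sigma> q) e = G V q (e \<circ> \<sigma>)"
proof -
  have inv1[simp]: "\<And>x. inv \<sigma> (\<sigma> x) = x" using b by (simp add: bij_is_inj)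
  have inv2[simp]: "\<And>x. \<sigma> (inv \<sigma> x) = x" using b by (simp add: bij_is_surj surj_f_inv_f)
  show E: "\<And>x y. (x,y) \<in> par_rel (tq \<sigma> q) \<longleftrightarrow> (inv \<sigma> x, inv \<sigma> y) \<in> par_rel q"
    unfolding par_rel_iff tq_def by (metis inv1 inv2 map_option_eq_Some)
  have E1: "\<And>x y. (x,y) \<in> par_rel q \<Longrightarrow> (\<sigma> x, \<sigma> y) \<in> par_rel (tq \<sigma> q)" using E by simp
  have E2: "\<And>x y. (x,y) \<in> par_rel (tq \<sigma> q) \<Longrightarrow> (inv \<sigma> x, inv \<sigma> y) \<in> par_rel q" using E by simp
  show ST: "\<And>j. subtree (tq \<sigma> q) (\<sigma> j) = \<sigma> ` subtree q j"
  proof (intro set_eqI iffI)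
    fix j k assume "k \<in> subtree (tq \<sigma> q) (\<sigma> j)"
    then have "(k, \<sigma> j) \<in> (par_rel (tq \<sigma> q))\<^sup>*" by (simp add: subtree_def)
    from rtrancl_fmap[where f="inv \<sigma>", OF this E2] have "(inv \<sigma> k, j) \<in> (par_rel q)\<^sup>*" by simp
    then show "k \<in> \<sigma> ` subtree q j" by (auto simp: subtree_def image_iff intro!: exI[of _ "inv \<sigma> k"])
  next
    fix j k assume "k \<in> \<sigma> ` subtree q j"
    then obtain k' where "k = \<sigma> k'" "(k', j) \<in> (par_rel q)\<^sup>*" by (auto simp: subtree_def)
    then show "k \<in> subtree (tq \<sigma> q) (\<sigma> j)" using rtrancl_fmap[where f="\<sigma>", OF \<open>(k', j) \<in> (par_rel q)\<^sup>*\<close> E1] by (auto simp: subtree_def)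
  qed
  have invV: "\<And>x. x \<in> V \<longleftrightarrow> inv \<sigma> x \<in> V" using SV by (metis image_iff inv1 inv2)
  show T': "rtree V (\<sigma> r) (tq \<sigma> q)"
    unfolding rtree_def
  proof (intro conjI allI impI ballI)
    show "acyclic (par_rel (tq \<sigma> q))"
      unfolding acyclic_def
    proof
      fix x show "(x,x) \<notin> (par_rel (tq \<sigma> q))\<^sup>+"
        using trancl_fmap[where f="inv \<sigma>" and a=x and b=x, OF _ E2] T unfolding rtree_def acyclic_def by blast
    qed
  next
    fix x y assume "tq \<sigma> q x = Some y"
    then obtain y' where "q (inv \<sigma> x) = Some y'" "y = \<sigma> y'" by (auto simp: tq_def)
    then show "y \<in> V" using T SV unfolding rtree_def by auto
  qed (use T invV SV inv2 in \<open>auto simp: rtree_def tq_def; metis\<close>)+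
  show "Ed (tq \<sigma> q) = (\<lambda>ed. \<sigma> ` ed) ` Ed q"
  proof (intro set_eqI iffI)
    fix x assume "x \<in> Ed (tq \<sigma> q)"
    then obtain j m where x: "x = {j,m}" "tq \<sigma> q j = Some m" unfolding Ed_def by auto
    then have "q (inv \<sigma> j) = Some (inv \<sigma> m)" using E par_rel_iff by metis
    then have "{inv \<sigma> j, inv \<sigma> m} \<in> Ed q" unfolding Ed_def by blast
    moreover have "x = \<sigma> ` {inv \<sigma> j, inv \<sigma> m}" using x by simp
    ultimately show "x \<in> (\<lambda>ed. \<sigma> ` ed) ` Ed q" by blast
  next
    fix x assume "x \<in> (\<lambda>ed. \<sigma> ` ed) ` Ed q"
    then obtain j m where x: "x = \<sigma> ` {j,m}" "q j = Some m" unfolding Ed_def by auto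
    then have "tq \<sigma> q (\<sigma> j) = Some (\<sigma> m)" by (simp add: tq_def)
    then show "x \<in> Ed (tq \<sigma> q)" using x unfolding Ed_def by auto
  qed
  have I: "{j\<in>V. tq \<sigma> q j \<noteq> None} = \<sigma> ` {j\<in>V. q j \<noteq> None}"
  proof (intro set_eqI iffI)
    fix x assume "x \<in> {j\<in>V. tq \<sigma> q j \<noteq> None}"
    then have "inv \<sigma> x \<in> {j\<in>V. q j \<noteq> None}" using invV by (auto simp: tq_def)
    then show "x \<in> \<sigma> ` {j\<in>V. q j \<noteq> None}" by (metis inv2 imageI)
  next
    fix x assume "x \<in> \<sigma> ` {j\<in>V. q j \<noteq> None}"
    then show "x \<in> {j\<in>V. tq \<sigma> q j \<noteq> None}" using SV by (auto simp: tq_def)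
  qed
  have inj: "inj \<sigma>" using b bij_is_inj by auto
  show "G V (tq \<sigma> q) e = G V q (e \<circ> \<sigma>)"
    unfolding G_def I
    by (subst prod.reindex[OF inj_on_subset[OF inj]]) (auto simp: ST sum.reindex[OF inj_on_subset[OF inj]])
qed


lemma par_rel_iff'[simp]: "(x,y) \<in> par_rel q \<longleftrightarrow> q x = Some y"
  by (simp add: par_rel_def)

definition b0 :: "nat \<Rightarrow> real" where "b0 i = 2 ^ i"

lemma ext0_b0_nz:
  assumes "A \<subseteq> {0..n}" "A \<noteq> {}" "A \<noteq> {0..n}"
  shows "(\<Sum>i\<in>A. ext0 n b0 i) \<noteq> 0"
proof (cases "0 \<in> A")
  case False
  then have "(\<Sum>i\<in>A. ext0 n b0 i) = (\<Sum>i\<in>A. 2 ^ i)"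
    by (intro sum.cong) (auto simp: ext0_def b0_def)
  moreover have "(\<Sum>i\<in>A. (2::real) ^ i) > 0"
    using assms by (intro sum_pos) (auto intro: finite_subset)
  ultimately show ?thesis by simp
next
  case True
  have fA: "finite A" using assms(1) finite_subset by blast
  have "(\<Sum>i\<in>A. ext0 n b0 i) = ext0 n b0 0 + (\<Sum>i\<in>A-{0}. ext0 n b0 i)"
    using True fA by (simp add: sum.remove)
  also have "(\<Sum>i\<in>A-{0}. ext0 n b0 i) = (\<Sum>i\<in>A-{0}. 2^i)"
    by (intro sum.cong) (auto simp: ext0_def b0_def)
  also have "ext0 n b0 0 = - (\<Sum>i\<in>{1..n}. 2^i)" by (simp add: ext0_def b0_def)
  also have "(\<Sum>i\<in>{1..n}. (2::real)^i) = (\<Sum>i\<in>A-{0}. 2^i) + (\<Sum>i\<in>{1..n}-(A-{0}). 2^i)"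
    using assms(1) by (subst sum.subset_diff[of "A-{0}"]) auto
  finally have eq: "(\<Sum>i\<in>A. ext0 n b0 i) = - (\<Sum>i\<in>{1..n}-(A-{0}). (2::real)^i)" by simp
  have "{1..n}-(A-{0}) \<noteq> {}"
  proof
    assume "{1..n}-(A-{0}) = {}"
    then have h: "{1..n} \<subseteq> A" by blast
    have "{0..n} \<subseteq> A"
    proof
      fix x assume "x \<in> {0..n}"
      then show "x \<in> A" using h True by (cases "x = 0") auto
    qed
    then show False using assms by auto
  qed
  then have "(\<Sum>i\<in>{1..n}-(A-{0}). (2::real)^i) > 0" by (intro sum_pos) auto
  then show ?thesis using eq by simp
qed

lemma generic_b0: "generic n b0"
  unfolding generic_def using ext0_b0_nz by blast

lemma ext0_line: "ext0 n (\<lambda>i. a i + t * b i) k = ext0 n a k + t * ext0 n b k"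
  by (simp add: ext0_def sum.distrib sum_distrib_left algebra_simps)

lemma finite_bad:
  "\<exists>B. finite B \<and> (\<forall>t. t \<notin> B \<longrightarrow> generic n (\<lambda>i. a i + t * b0 i))"
proof -
  let ?AA = "{A. A \<subseteq> {0..n} \<and> A \<noteq> {} \<and> A \<noteq> {0..n}}"
  let ?B = "(\<lambda>A. - (\<Sum>i\<in>A. ext0 n a i) / (\<Sum>i\<in>A. ext0 n b0 i)) ` ?AA"
  have "finite ?AA" by (rule finite_subset[of _ "Pow {0..n}"]) auto
  then have "finite ?B" by simp
  moreover have "\<forall>t. t \<notin> ?B \<longrightarrow> generic n (\<lambda>i. a i + t * b0 i)"
  proof (intro allI impI)
    fix t assume t: "t \<notin> ?B"
    show "generic n (\<lambda>i. a i + t * b0 i)"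
      unfolding generic_def
    proof (intro allI impI)
      fix A assume A: "A \<subseteq> {0..n}" "A \<noteq> {}" "A \<noteq> {0..n}"
      have nz: "(\<Sum>i\<in>A. ext0 n b0 i) \<noteq> 0" using ext0_b0_nz[OF A] .
      have "(\<Sum>i\<in>A. ext0 n (\<lambda>i. a i + t * b0 i) i) = (\<Sum>i\<in>A. ext0 n a i) + t * (\<Sum>i\<in>A. ext0 n b0 i)"
        by (simp add: ext0_line sum.distrib sum_distrib_left)
      moreover have "t \<noteq> - (\<Sum>i\<in>A. ext0 n a i) / (\<Sum>i\<in>A. ext0 n b0 i)" using t A by blast
      ultimately show "(\<Sum>i\<in>A. ext0 n (\<lambda>i. a i + t * b0 i) i) \<noteq> 0"
        using nz by (auto simp: field_simps)
    qed
  qed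
  ultimately show ?thesis by blast
qed

lemma prod_line_poly:
  "(\<Prod>j\<in>J. \<Sum>k\<in>X j. (a k + t * b k)) = poly (\<Prod>j\<in>J. [:\<Sum>k\<in>X j. a k, \<Sum>k\<in>X j. b k:]) t"
  by (simp add: poly_prod sum.distrib sum_distrib_left algebra_simps)

lemma extend_identity:
  fixes c1 c2 :: real
  assumes "\<And>u. generic n u \<Longrightarrow>
     c1 * (\<Prod>j\<in>J. \<Sum>k\<in>X j. u k) = c2 * (\<Prod>j\<in>J. \<Sum>k\<in>Y j. u k)"
  shows "c1 * (\<Prod>j\<in>J. \<Sum>k\<in>X j. a k) = c2 * (\<Prod>j\<in>J. \<Sum>k\<in>Y j. a k)"
proof -
  obtain B where B: "finite B" "\<And>t. t \<notin> B \<Longrightarrow> generic n (\<lambda>i. a i + t * b0 i)"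
    using finite_bad[of n a] by blast
  define R where "R = smult c1 (\<Prod>j\<in>J. [:\<Sum>k\<in>X j. a k, \<Sum>k\<in>X j. b0 k:])
     - smult c2 (\<Prod>j\<in>J. [:\<Sum>k\<in>Y j. a k, \<Sum>k\<in>Y j. b0 k:])"
  have ev: "\<And>t. poly R t = c1 * (\<Prod>j\<in>J. \<Sum>k\<in>X j. (a k + t * b0 k))
       - c2 * (\<Prod>j\<in>J. \<Sum>k\<in>Y j. (a k + t * b0 k))"
    unfolding R_def by (simp add: prod_line_poly)
  have "{t. poly R t = 0} \<supseteq> - B" using B(2) assms ev by auto
  moreover have "infinite (- B)" using B(1) by (simp add: Compl_eq_Diff_UNIV infinite_UNIV_char_0)
  ultimately have "infinite {t. poly R t = 0}" using finite_subset by blast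
  then have "R = 0" using poly_roots_finite by blast
  then have "poly R 0 = 0" by simp
  then show ?thesis using ev[of 0] by simp
qed


lemma special_point:
  assumes A: "A \<subseteq> {1..n}" "j \<in> A"
  defines "u \<equiv> \<lambda>i. if i = j then 1 - real (card A) else if i \<in> A then 1 else real n + 1"
  shows "(\<Sum>i\<in>A. u i) = 0" "\<And>B. B \<subseteq> {1..n} \<Longrightarrow> (\<Sum>i\<in>B. u i) = 0 \<Longrightarrow> B = {} \<or> B = A"
proof -
  have fA: "finite A" using A finite_subset by blast
  have cA: "card A \<le> n" using card_mono[OF _ A(1)] by simp
  have cA1: "card A \<ge> 1" using fA A(2) card_0_eq[OF fA] by fastforce
  have core: "\<And>C. C \<subseteq> A \<Longrightarrow> (\<Sum>i\<in>C. u i) = (if j \<in> C then 1 - real (card A) else 0) + real (card (C - {j}))"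
  proof -
    fix C assume C: "C \<subseteq> A"
    have fC: "finite C" using C fA finite_subset by blast
    have s1: "(\<Sum>i\<in>C - {j}. u i) = real (card (C - {j}))"
      using C by (simp add: u_def subset_iff)
    show "(\<Sum>i\<in>C. u i) = (if j \<in> C then 1 - real (card A) else 0) + real (card (C - {j}))"
    proof (cases "j \<in> C")
      case True
      then show ?thesis using s1 fC by (simp add: sum.remove u_def)
    next
      case False then show ?thesis using s1 by simp
    qed
  qed
  have cAj: "card (A - {j}) = card A - 1" using fA A(2) by simp
  show "(\<Sum>i\<in>A. u i) = 0" using core[of A] A(2) cAj cA1 by (simp add: of_nat_diff)
  fix B assume B: "B \<subseteq> {1..n}" "(\<Sum>i\<in>B. u i) = 0"
  have fB: "finite B" using B finite_subset by blast
  have split: "(\<Sum>i\<in>B. u i) = (\<Sum>i\<in>B \<inter> A. u i) + (\<Sum>i\<in>B - A. u i)"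
    using fB by (simp add: sum.Int_Diff)
  have "(\<Sum>i\<in>B - A. u i) = (\<Sum>i\<in>B - A. real n + 1)"
    using A(2) by (intro sum.cong) (auto simp: u_def)
  then have s2: "(\<Sum>i\<in>B - A. u i) = (real n + 1) * real (card (B - A))" by simp
  have lb: "(\<Sum>i\<in>B \<inter> A. u i) \<ge> 1 - real n"
    using core[of "B \<inter> A"] cA cA1 by auto
  show "B = {} \<or> B = A"
  proof (cases "B - A = {}")
    case False
    then have "card (B - A) \<ge> 1" using fB by (simp add: Suc_leI card_gt_0_iff)
    then have "(\<Sum>i\<in>B - A. u i) \<ge> real n + 1" using s2
      by (metis mult.right_neutral mult_left_mono of_nat_0_le_iff of_nat_1 of_nat_le_iff add_nonneg_nonneg zero_le_one)
    then show ?thesis using lb split B(2) by linarith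
  next
    case True
    then have BA: "B \<subseteq> A" by blast
    then have BA': "B \<inter> A = B" by blast
    show ?thesis
    proof (cases "j \<in> B")
      case False
      then have "real (card B) = 0" using core[OF BA] B(2) by simp
      then show ?thesis using fB by simp
    next
      case True
      then have "real (card (B - {j})) = real (card A) - 1" using core[OF BA] B(2) by simp
      then have "card (B - {j}) = card (A - {j})" using cAj cA1 by linarith
      moreover have "B - {j} \<subseteq> A - {j}" using BA by blast
      ultimately have "B - {j} = A - {j}" using fA by (meson card_subset_eq finite_Diff)
      then have "B = A" using True A(2) by blast
      then show ?thesis by simp
    qed
  qed
qed


lemma forest_dom': "is_forest n p \<Longrightarrow> p i = Some j \<Longrightarrow> i \<in> {1..n} \<and> j \<in> {1..n}"
  unfolding is_forest_def by (metis option.distinct(1))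

lemma forest_subtree_sub':
  assumes "is_forest n p" "j \<in> {1..n}" shows "subtree p j \<subseteq> {1..n}"
proof
  fix k assume "k \<in> subtree p j"
  hence "(k,j) \<in> (par_rel p)\<^sup>*" by (simp add: subtree_def)
  then show "k \<in> {1..n}"
    by (cases rule: converse_rtranclE) (use assms forest_dom' in auto)
qed

lemma forest_acyc: "is_forest n p \<Longrightarrow> (i,i) \<notin> (par_rel p)\<^sup>+"
  unfolding is_forest_def by blast

lemma forest_strict:
  assumes F: "is_forest n p" and k: "k \<in> subtree p j" "k \<noteq> j"
  shows "subtree p k \<subset> subtree p j"
proof -
  have kj: "(k,j) \<in> (par_rel p)\<^sup>*" using k by (simp add: subtree_def)
  have "subtree p k \<subseteq> subtree p j" using kj by (auto simp: subtree_def)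
  moreover have "j \<notin> subtree p k"
  proof
    assume "j \<in> subtree p k"
    then have "(j,k) \<in> (par_rel p)\<^sup>*" by (simp add: subtree_def)
    then have "(j,k) \<in> (par_rel p)\<^sup>+" using k(2) rtranclD by metis
    then have "(j,j) \<in> (par_rel p)\<^sup>+" using kj by (meson trancl_rtrancl_trancl)
    then show False using forest_acyc[OF F] by blast
  qed
  moreover have "j \<in> subtree p j" by (simp add: subtree_def)
  ultimately show ?thesis by blast
qed

lemma fam_eq:
  assumes F1: "is_forest n p1" and F2: "is_forest n p2"
    and H: "\<And>j. j \<in> {1..n} \<Longrightarrow> \<exists>k\<in>{1..n}. subtree p1 j = subtree p2 k"
  shows "\<And>j. j \<in> {1..n} \<Longrightarrow> subtree p1 j = subtree p2 j"
proof -
  have "\<forall>j. j \<in> {1..n} \<longrightarrow> card (subtree p1 j) = N \<longrightarrow> subtree p1 j = subtree p2 j" for N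
  proof (induction N rule: less_induct)
    case (less N)
    show ?case
    proof (intro allI impI)
      fix j assume j: "j \<in> {1..n}" and cN: "card (subtree p1 j) = N"
      obtain k where k: "k \<in> {1..n}" "subtree p1 j = subtree p2 k" using H[OF j] by blast
      show "subtree p1 j = subtree p2 j"
      proof (cases "k = j")
        case True then show ?thesis using k by simp
      next
        case False
        have "k \<in> subtree p1 j" using k by (simp add: subtree_def)
        then have ps: "subtree p1 k \<subset> subtree p1 j" using forest_strict[OF F1] False by blast
        have "finite (subtree p1 j)" using forest_subtree_sub'[OF F1 j] finite_subset by blast
        then have "card (subtree p1 k) < N" using ps cN psubset_card_mono by blast
        then have "subtree p1 k = subtree p2 k" using less.IH k(1) by blast
        then show ?thesis using ps k by simp
      qed
    qed
  qed
  then show "\<And>j. j \<in> {1..n} \<Longrightarrow> subtree p1 j = subtree p2 j" by blast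
qed

lemma parent_char:
  assumes F: "is_forest n p"
  shows "p i = Some m \<longleftrightarrow> ((i,m) \<in> (par_rel p)\<^sup>* \<and> i \<noteq> m \<and>
     (\<forall>k. (i,k) \<in> (par_rel p)\<^sup>* \<and> i \<noteq> k \<longrightarrow> (m,k) \<in> (par_rel p)\<^sup>*))"
proof
  assume pm: "p i = Some m"
  have "i \<noteq> m" using pm forest_acyc[OF F, of i] by (metis par_rel_iff' r_into_trancl)
  moreover have "\<forall>k. (i,k) \<in> (par_rel p)\<^sup>* \<and> i \<noteq> k \<longrightarrow> (m,k) \<in> (par_rel p)\<^sup>*"
  proof (intro allI impI)
    fix k assume "(i,k) \<in> (par_rel p)\<^sup>* \<and> i \<noteq> k"
    then obtain y where "(i,y) \<in> par_rel p" "(y,k) \<in> (par_rel p)\<^sup>*" by (meson converse_rtranclE)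
    then show "(m,k) \<in> (par_rel p)\<^sup>*" using pm by simp
  qed
  ultimately show "(i,m) \<in> (par_rel p)\<^sup>* \<and> i \<noteq> m \<and>
     (\<forall>k. (i,k) \<in> (par_rel p)\<^sup>* \<and> i \<noteq> k \<longrightarrow> (m,k) \<in> (par_rel p)\<^sup>*)" using pm by auto
next
  assume h: "(i,m) \<in> (par_rel p)\<^sup>* \<and> i \<noteq> m \<and>
     (\<forall>k. (i,k) \<in> (par_rel p)\<^sup>* \<and> i \<noteq> k \<longrightarrow> (m,k) \<in> (par_rel p)\<^sup>*)"
  then obtain y where y: "p i = Some y" "(y,m) \<in> (par_rel p)\<^sup>*" by (metis converse_rtranclE par_rel_iff')
  have "i \<noteq> y" using y forest_acyc[OF F, of i] by (metis par_rel_iff' r_into_trancl)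
  moreover have "(i,y) \<in> (par_rel p)\<^sup>*" using y by (simp add: r_into_rtrancl)
  ultimately have "(m,y) \<in> (par_rel p)\<^sup>*" using h by blast
  show "p i = Some m"
  proof (cases "y = m")
    case True then show ?thesis using y by simp
  next
    case False
    then have "(y,m) \<in> (par_rel p)\<^sup>+" using y rtranclD by metis
    then have "(y,y) \<in> (par_rel p)\<^sup>+" using \<open>(m,y) \<in> _\<close> by (meson trancl_rtrancl_trancl)
    then show ?thesis using forest_acyc[OF F] by blast
  qed
qed

lemma forest_eq:
  assumes F1: "is_forest n p1" and F2: "is_forest n p2"
    and S: "\<And>j. j \<in> {1..n} \<Longrightarrow> subtree p1 j = subtree p2 j"
  shows "p1 = p2"
proof -
  have out: "\<And>p a b. is_forest n p \<Longrightarrow> b \<notin> {1..n} \<Longrightarrow> (a,b) \<in> (par_rel p)\<^sup>* \<Longrightarrow> a = b"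
  proof -
    fix p a b assume F: "is_forest n p" "b \<notin> {1..n}" "(a,b) \<in> (par_rel p)\<^sup>*"
    show "a = b" using F(3)
      by (cases rule: rtranclE) (use F forest_dom'[OF F(1)] in auto)
  qed
  have R: "\<And>a b. (a,b) \<in> (par_rel p1)\<^sup>* \<longleftrightarrow> (a,b) \<in> (par_rel p2)\<^sup>*"
  proof -
    fix a b
    show "(a,b) \<in> (par_rel p1)\<^sup>* \<longleftrightarrow> (a,b) \<in> (par_rel p2)\<^sup>*"
    proof (cases "b \<in> {1..n}")
      case True then show ?thesis using S[OF True] unfolding subtree_def by blast
    next
      case False then show ?thesis using out[OF F1 False] out[OF F2 False] by blast
    qed
  qed
  have "\<And>i m. p1 i = Some m \<longleftrightarrow> p2 i = Some m"
    using parent_char[OF F1] parent_char[OF F2] R by presburger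
  then show ?thesis by (metis not_None_eq ext)
qed


lemma generic_sum_nz:
  assumes F: "is_forest n p" and j: "j \<in> {1..n}" and g: "generic n u"
  shows "(\<Sum>k\<in>subtree p j. u k) \<noteq> 0"
proof -
  have sub: "subtree p j \<subseteq> {1..n}" by (rule forest_subtree_sub'[OF F j])
  have "(\<Sum>k\<in>subtree p j. ext0 n u k) \<noteq> 0"
  proof -
    have "subtree p j \<subseteq> {0..n}" using sub by auto
    moreover have "subtree p j \<noteq> {}" using subtree_def by auto
    moreover have "0 \<notin> subtree p j" using sub by auto
    hence "subtree p j \<noteq> {0..n}" by auto
    ultimately show ?thesis using g unfolding generic_def by blast
  qed
  moreover have "(\<Sum>k\<in>subtree p j. ext0 n u k) = (\<Sum>k\<in>subtree p j. u k)"
    using sub by (intro sum.cong) (auto simp: ext0_def)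
  ultimately show ?thesis by simp
qed


lemma fF_eq_inv: "fF n p u = 1 / (\<Prod>j\<in>{1..n}. \<Sum>k\<in>subtree p j. u k)"
  unfolding fF_def by (simp add: prod_dividef)

lemma forest_inj:
  assumes F1: "is_forest n p1" and F2: "is_forest n p2"
    and e1: "\<epsilon>1 \<in> {1, -1::int}" and e2: "\<epsilon>2 \<in> {1, -1::int}"
    and H: "\<And>u. generic n u \<Longrightarrow> of_int \<epsilon>1 * fF n p1 u = of_int \<epsilon>2 * fF n p2 u"
  shows "p1 = p2 \<and> \<epsilon>1 = \<epsilon>2"
proof -
  let ?P = "\<lambda>p u. \<Prod>j\<in>{1..n}. \<Sum>k\<in>subtree p j. (u k :: real)"
  have Pnz: "\<And>p u. is_forest n p \<Longrightarrow> generic n u \<Longrightarrow> ?P p u \<noteq> 0"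
    using generic_sum_nz by (simp add: prod_zero_iff)
  have G: "\<And>u. generic n u \<Longrightarrow> of_int \<epsilon>1 * ?P p2 u = of_int \<epsilon>2 * ?P p1 u"
  proof -
    fix u assume g: "generic n u"
    have "of_int \<epsilon>1 / ?P p1 u = of_int \<epsilon>2 / ?P p2 u" using H[OF g] by (simp add: fF_eq_inv)
    then show "of_int \<epsilon>1 * ?P p2 u = of_int \<epsilon>2 * ?P p1 u"
      using Pnz[OF F1 g] Pnz[OF F2 g] by (simp add: field_simps)
  qed
  have ALL: "\<And>a. of_int \<epsilon>1 * ?P p2 a = of_int \<epsilon>2 * ?P p1 a"
    by (rule extend_identity[of n]) (rule G)
  have e1nz: "(of_int \<epsilon>1 :: real) \<noteq> 0" using e1 by auto
  have fam: "\<And>j. j \<in> {1..n} \<Longrightarrow> \<exists>k\<in>{1..n}. subtree p1 j = subtree p2 k"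
  proof -
    fix j :: nat assume j: "j \<in> {1..n}"
    let ?A = "subtree p1 j"
    have A: "?A \<subseteq> {1..n}" "j \<in> ?A" using forest_subtree_sub'[OF F1 j] by (auto simp: subtree_def)
    define u where "u = (\<lambda>i. if i = j then 1 - real (card ?A) else if i \<in> ?A then 1 else real n + (1::real))"
    note SP = special_point[OF A, folded u_def]
    have h0: "?P p1 u = 0" using SP(1) j by (subst prod_zero_iff) auto
    have "of_int \<epsilon>1 * ?P p2 u = 0" using ALL[of u] h0 by (metis mult_zero_right)
    then have "?P p2 u = 0" using e1nz by (metis mult_eq_0_iff)
    then obtain k where k: "k \<in> {1..n}" "(\<Sum>i\<in>subtree p2 k. u i) = 0" by (auto simp: prod_zero_iff)
    have "subtree p2 k = {} \<or> subtree p2 k = ?A"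
      using SP(2)[OF forest_subtree_sub'[OF F2 k(1)] k(2)] .
    moreover have "subtree p2 k \<noteq> {}" by (auto simp: subtree_def)
    ultimately show "\<exists>k\<in>{1..n}. subtree p1 j = subtree p2 k" using k(1) by auto
  qed
  have peq: "p1 = p2" using forest_eq[OF F1 F2 fam_eq[OF F1 F2 fam]] by blast
  have "fF n p1 b0 \<noteq> 0" using Pnz[OF F1 generic_b0] by (simp add: fF_eq_inv)
  then have "(of_int \<epsilon>1 :: real) = of_int \<epsilon>2" using H[OF generic_b0] peq by simp
  then show ?thesis using peq by simp
qed

lemma G_cong:
  assumes T: "rtree V r q" and E: "\<And>k. k \<in> V \<Longrightarrow> e k = e' k"
  shows "G V q e = G V q e'"
  unfolding G_def
proof (rule prod.cong[OF refl])
  fix j assume "j \<in> {j\<in>V. q j \<noteq> None}"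
  then have "subtree q j \<subseteq> V" using subtree_sub[OF T] by blast
  then show "1 / (\<Sum>k\<in>subtree q j. e k) = 1 / (\<Sum>k\<in>subtree q j. e' k)"
    using E by (metis subsetD sum.cong)
qed

lemma ext0_sum: "(\<Sum>i\<in>{0..n}. ext0 n u i) = 0"
proof -
  have "{0..n} = insert 0 {1..n}" by auto
  then have "(\<Sum>i\<in>{0..n}. ext0 n u i) = ext0 n u 0 + (\<Sum>i\<in>{1..n}. ext0 n u i)" by simp
  also have "(\<Sum>i\<in>{1..n}. ext0 n u i) = (\<Sum>i\<in>{1..n}. u i)" by (intro sum.cong) (auto simp: ext0_def)
  finally show ?thesis by (simp add: ext0_def)
qed

theorem mainTheorem19:
  fixes n :: nat and \<sigma> :: "nat \<Rightarrow> nat"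
    and \<epsilon> \<epsilon>' :: int and p p' :: "nat \<Rightarrow> nat option"
  assumes "n \<ge> 1"
    and "\<sigma> permutes {0..n}"
    and "is_forest n p" and "\<epsilon> \<in> {1, -1}"
    and "is_forest n p'" and "\<epsilon>' \<in> {1, -1}"
    and "anticyc_rel n \<sigma> (\<epsilon>, p) (\<epsilon>', p')"
  shows "C_eq (B0 n (\<epsilon>', p')) (relabel \<sigma> (B0 n (\<epsilon>, p)))"
proof -
  let ?V = "{0..n} :: nat set"
  define q where "q = qp n p"
  note QF = qp_facts[OF assms(3), folded q_def]
  have bs: "bij \<sigma>" using permutes_bij[OF assms(2)] .
  have SV: "\<sigma> ` ?V = ?V" using permutes_image[OF assms(2)] .
  define qs where "qs = tq \<sigma> q"
  note TF = tq_facts[OF QF(1) bs SV, folded qs_def]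
  have zV: "(0::nat) \<in> ?V" by simp
  obtain q0 and s :: int where R: "rtree ?V 0 q0" "Ed q0 = Ed qs" "s = 1 \<or> s = -1"
    "\<forall>e. (\<Sum>k\<in>?V. e k) = 0 \<longrightarrow> G ?V q0 e = of_int s * G ?V qs e"
    "\<forall>\<epsilon>. C_eq (\<epsilon>, Ed qs, \<sigma> 0) (s*\<epsilon>, Ed qs, 0)"
    using reroot[OF TF(3) zV] by blast
  define p0 where "p0 = (\<lambda>j. if q0 j = Some 0 then None else q0 j)"
  note PF = q_to_forest[OF R(1), folded p0_def]
  have key: "\<And>u. generic n u \<Longrightarrow> of_int \<epsilon>' * fF n p' u = of_int (\<epsilon> * s) * fF n p0 u"
  proof -
    fix u assume g: "generic n u"
    have h: "of_int \<epsilon>' * fF n p' u = of_int \<epsilon> * fF n p (perm_pt n \<sigma> u)"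
      using assms(7) g unfolding anticyc_rel_def by simp
    have "fF n p (perm_pt n \<sigma> u) = G ?V q (ext0 n (perm_pt n \<sigma> u))"
      using qp_facts(4)[OF assms(3)] q_def by simp
    also have "\<dots> = G ?V q (ext0 n u \<circ> \<sigma>)"
    proof (rule G_cong[OF QF(1)])
      fix k assume k: "k \<in> ?V"
      show "ext0 n (perm_pt n \<sigma> u) k = (ext0 n u \<circ> \<sigma>) k"
      proof (cases "k = 0")
        case False then show ?thesis by (simp add: ext0_def perm_pt_def)
      next
        case True
        have "(\<Sum>i\<in>?V. ext0 n u i) = (\<Sum>i\<in>?V. (ext0 n u \<circ> \<sigma>) i)"
          using sum.permute[OF assms(2)] by blast
        moreover have "?V = insert 0 {1..n}" by auto
        ultimately have "0 = (ext0 n u \<circ> \<sigma>) 0 + (\<Sum>i\<in>{1..n}. (ext0 n u \<circ> \<sigma>) i)"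
          using ext0_sum[of n u] by simp
        then show ?thesis using True by (simp add: ext0_def perm_pt_def)
      qed
    qed
    also have "\<dots> = G ?V qs (ext0 n u)" using TF(5) by simp
    also have "\<dots> = of_int s * G ?V q0 (ext0 n u)"
      using R(3) R(4)[rule_format, OF ext0_sum] by auto
    also have "G ?V q0 (ext0 n u) = fF n p0 u" using qp_facts(4)[OF PF(1)] PF(2) by simp
    finally show "of_int \<epsilon>' * fF n p' u = of_int (\<epsilon> * s) * fF n p0 u" using h by simp
  qed
  have es: "\<epsilon> * s \<in> {1, -1}" using assms(4) R(3) by auto
  have inj: "p' = p0 \<and> \<epsilon>' = \<epsilon> * s" using forest_inj[OF assms(5) PF(1) assms(6) es key] by blast
  have "B0 n (\<epsilon>', p') = (\<epsilon>', Ed (qp n p'), 0)"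
    using qp_facts(2)[OF assms(5)] by (simp add: B0_def)
  also have "Ed (qp n p') = Ed qs" using inj PF(2) R(2) by simp
  finally have b1: "B0 n (\<epsilon>', p') = (s * \<epsilon>, Ed qs, 0)" using inj by simp
  have "relabel \<sigma> (B0 n (\<epsilon>, p)) = (\<epsilon>, (\<lambda>ed. \<sigma> ` ed) ` Ed q, \<sigma> 0)"
    using QF(2) by (simp add: B0_def relabel_def)
  then have b2: "relabel \<sigma> (B0 n (\<epsilon>, p)) = (\<epsilon>, Ed qs, \<sigma> 0)" using TF(4) by simp
  show ?thesis unfolding b1 b2 using C_eq_sym R(5) by blast
qed

end
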